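(* Let $P$ be a probability distribution of $\xi$, $\mathcal X\subseteq\mathbb R^d$, $\lambda>0$. Assume: (i) for every $\xi$, $x\mapsto\ell(x;\xi)$ is $G$-Lipschitz and $L$-smooth on $\mathcal X$; (ii) $\psi:\mathbb R\to[0,+\infty]$ is convex, $\psi(1)=0$, $\psi(t)=+\infty$ for $t<0$, and $\psi^*(t)=\sup_s(st-\psi(s))$ is $M$-smooth. Let $\mathcal L(x,\eta)=\mathbb E_\xi[\lambda\psi^*((\ell(x;\xi)-\eta)/\lambda)+\eta]$. Then for any $x$ and any $\eta_1,\eta_2\in\arg\min_\eta\mathcal L(x,\eta)$, $\nabla_x\mathcal L(x,\eta_1)=\nabla_x\mathcal L(x,\eta_2)$. *)

theory Defs
  imports "HOL-Probability.Probability"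
begin

text \<open>Gradient of a real-valued function on a Euclidean space (the vector g with
  derivative h \<mapsto> g \<bullet> h at x); unspecified if f is not differentiable at x.\<close>
definition grad :: "('a::euclidean_space \<Rightarrow> real) \<Rightarrow> 'a \<Rightarrow> 'a" where
  "grad f x = (SOME g. (f has_derivative (\<lambda>h. g \<bullet> h)) (at x))"

definition smooth_on :: "real \<Rightarrow> 'a::euclidean_space set \<Rightarrow> ('a \<Rightarrow> real) \<Rightarrow> bool" where
  "smooth_on L X f \<longleftrightarrow> (\<forall>x\<in>X. f differentiable (at x)) \<and>
     (\<forall>x\<in>X. \<forall>y\<in>X. norm (grad f x - grad f y) \<le> L * norm (x - y))"

definition smooth_real :: "real \<Rightarrow> (real \<Rightarrow> real) \<Rightarrow> bool" where
  "smooth_real M f \<longleftrightarrow> (\<forall>t. f differentiable (at t)) \<and>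
     (\<forall>s t. \<bar>deriv f s - deriv f t\<bar> \<le> M * \<bar>s - t\<bar>)"

definition ereal_convex :: "(real \<Rightarrow> ereal) \<Rightarrow> bool" where
  "ereal_convex f \<longleftrightarrow> (\<forall>x y u. 0 \<le> u \<and> u \<le> 1 \<longrightarrow>
     f (u * x + (1 - u) * y) \<le> ereal u * f x + ereal (1 - u) * f y)"

definition conj :: "(real \<Rightarrow> ereal) \<Rightarrow> real \<Rightarrow> ereal" where
  "conj \<psi> t = (SUP s. ereal (s * t) - \<psi> s)"

definition objL :: "'b measure \<Rightarrow> real \<Rightarrow> (real \<Rightarrow> real) \<Rightarrow> ('a \<Rightarrow> 'b \<Rightarrow> real) \<Rightarrow> 'a \<Rightarrow> real \<Rightarrow> real" where
  "objL P lam psis l x \<eta> = (\<integral>\<xi>. lam * psis ((l x \<xi> - \<eta>) / lam) + \<eta> \<partial>P)"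

end

theory Submission
  imports Defs
begin

lemma conj_convex:
  fixes \<psi> :: "real \<Rightarrow> ereal" and \<psi>s :: "real \<Rightarrow> real"
  assumes cj: "\<And>t. conj \<psi> t = ereal (\<psi>s t)" and nn: "\<And>s. \<psi> s \<ge> 0"
  shows "convex_on UNIV \<psi>s"
proof (rule convex_onI)
  fix t x y :: real assume t: "t > 0" "t < 1"
  have up: "s * a - p \<le> \<psi>s a" if "\<psi> s = ereal p" for s a p
  proof -
    have "ereal (s * a) - \<psi> s \<le> conj \<psi> a" unfolding conj_def by (rule SUP_upper) auto
    then show ?thesis using that cj[of a] by simp
  qed
  have "conj \<psi> ((1 - t) *\<^sub>R x + t *\<^sub>R y) \<le> ereal ((1 - t) * \<psi>s x + t * \<psi>s y)"
    unfolding conj_def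
  proof (rule SUP_least)
    fix s assume "s \<in> (UNIV::real set)"
    show "ereal (s * ((1 - t) *\<^sub>R x + t *\<^sub>R y)) - \<psi> s \<le> ereal ((1 - t) * \<psi>s x + t * \<psi>s y)"
    proof (cases "\<psi> s")
      case (real p)
      have "s * ((1 - t) * x + t * y) - p = (1 - t) * (s * x - p) + t * (s * y - p)"
        by (simp add: algebra_simps)
      also have "\<dots> \<le> (1 - t) * \<psi>s x + t * \<psi>s y"
        using up[OF real, of x] up[OF real, of y] t
        by (intro add_mono mult_left_mono) auto
      finally show ?thesis using real by simp
    next
      case PInf then show ?thesis by simp
    next
      case MInf then show ?thesis using nn[of s] by simp
    qed
  qed
  then show "\<psi>s ((1 - t) *\<^sub>R x + t *\<^sub>R y) \<le> (1 - t) * \<psi>s x + t * \<psi>s y"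
    using cj by simp
qed simp
lemma mid_deriv_eq:
  fixes f :: "real \<Rightarrow> real"
  assumes cv: "convex_on UNIV f" and df: "\<And>t. f differentiable (at t)"
    and mid: "f ((a + b) / 2) = (f a + f b) / 2"
  shows "deriv f a = deriv f b"
proof -
  define m where "m = (a + b) / 2"
  define d where "d = deriv f m"
  have D: "\<And>t. (f has_field_derivative deriv f t) (at t)"
    using df by (simp add: DERIV_deriv_iff_real_differentiable)
  have tan: "f t - f m \<ge> d * (t - m)" for t
    unfolding d_def by (rule convex_on_imp_above_tangent[OF cv]) (use D in auto)
  have fm: "2 * f m = f a + f b" using mid unfolding m_def by simp
  have s0: "d * (a - m) + d * (b - m) = 0" by (simp add: m_def algebra_simps)
  have aux: "\<And>X Y p q r :: real. X \<le> p - r \<Longrightarrow> Y \<le> q - r \<Longrightarrow> 2 * r = p + q \<Longrightarrow> X + Y = 0 \<Longrightarrow> p - r = X \<and> q - r = Y"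
    by (intro conjI; linarith)
  have ea: "f a - f m = d * (a - m)" and eb: "f b - f m = d * (b - m)"
    using aux[OF tan[of a] tan[of b] fm s0] by auto
  have key: "deriv f c = d" if ec: "f c - f m = d * (c - m)" for c
  proof -
    have h1: "((\<lambda>t. f t - f m - d * (t - m)) has_field_derivative (deriv f c - d)) (at c)"
      by (auto intro!: derivative_eq_intros D)
    have h2: "\<forall>y. \<bar>c - y\<bar> < 1 \<longrightarrow> f c - f m - d * (c - m) \<le> f y - f m - d * (y - m)"
      using ec tan by auto
    have "deriv f c - d = 0" by (rule DERIV_local_min[OF h1 zero_less_one h2])
    then show ?thesis by simp
  qed
  show ?thesis using key[OF ea] key[OF eb] by simp
qed

lemma taylor_bound:
  fixes f :: "real \<Rightarrow> real"
  assumes df: "\<And>t. f differentiable (at t)"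
    and lip: "\<And>s t. \<bar>deriv f s - deriv f t\<bar> \<le> M * \<bar>s - t\<bar>"
  shows "\<bar>f (t + \<delta>) - f t - deriv f t * \<delta>\<bar> \<le> M * \<delta>^2"
proof -
  have D: "\<And>t. (f has_field_derivative deriv f t) (at t)"
    using df by (simp add: DERIV_deriv_iff_real_differentiable)
  consider "\<delta> = 0" | "\<delta> > 0" | "\<delta> < 0" by linarith
  then show ?thesis
  proof cases
    case 1 then show ?thesis by simp
  next
    case 2
    obtain z where z: "t < z" "z < t + \<delta>" "f (t + \<delta>) - f t = (t + \<delta> - t) * deriv f z"
      using MVT2[of t "t + \<delta>" f "deriv f"] 2 D by auto
    have "f (t + \<delta>) - f t - deriv f t * \<delta> = (deriv f z - deriv f t) * \<delta>"
      using z by (simp add: algebra_simps)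
    then have "\<bar>f (t + \<delta>) - f t - deriv f t * \<delta>\<bar> = \<bar>deriv f z - deriv f t\<bar> * \<delta>"
      using 2 by (simp add: abs_mult)
    also have "\<dots> \<le> (M * \<bar>z - t\<bar>) * \<delta>" using lip[of z t] 2 by (intro mult_right_mono) auto
    also have "\<dots> \<le> (M * \<delta>) * \<delta>"
    proof -
      have "M \<ge> 0" using lip[of 1 0] by simp
      then show ?thesis using z 2 by (intro mult_right_mono mult_left_mono) auto
    qed
    finally show ?thesis by (simp add: power2_eq_square)
  next
    case 3
    obtain z where z: "t + \<delta> < z" "z < t" "f t - f (t + \<delta>) = (t - (t + \<delta>)) * deriv f z"
      using MVT2[of "t + \<delta>" t f "deriv f"] 3 D by auto
    have "f (t + \<delta>) - f t - deriv f t * \<delta> = (deriv f z - deriv f t) * \<delta>"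
      using z by (simp add: algebra_simps)
    then have "\<bar>f (t + \<delta>) - f t - deriv f t * \<delta>\<bar> = \<bar>deriv f z - deriv f t\<bar> * (- \<delta>)"
      using 3 by (simp add: abs_mult)
    also have "\<dots> \<le> (M * \<bar>z - t\<bar>) * (- \<delta>)" using lip[of z t] 3 by (intro mult_right_mono) auto
    also have "\<dots> \<le> (M * (- \<delta>)) * (- \<delta>)"
    proof -
      have "M \<ge> 0" using lip[of 1 0] by simp
      then show ?thesis using z 3 by (intro mult_right_mono mult_left_mono) auto
    qed
    finally show ?thesis by (simp add: power2_eq_square)
  qed
qed
theorem lemmaA6:
  fixes P :: "'b measure" and X :: "'a::euclidean_space set"
    and l :: "'a \<Rightarrow> 'b \<Rightarrow> real" and \<psi> :: "real \<Rightarrow> ereal" and \<psi>s :: "real \<Rightarrow> real"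
    and lam G Lsm M :: real and x :: 'a and \<eta>1 \<eta>2 :: real
  assumes "prob_space P"
    and "open X"
    and "lam > 0"
    and "\<And>y. y \<in> X \<Longrightarrow> l y \<in> borel_measurable P"
    and "\<And>\<xi>. G-lipschitz_on X (\<lambda>y. l y \<xi>)"
    and "\<And>\<xi>. smooth_on Lsm X (\<lambda>y. l y \<xi>)"
    and "ereal_convex \<psi>"
    and "\<And>s. \<psi> s \<ge> 0"
    and "\<psi> 1 = 0"
    and "\<And>s. s < 0 \<Longrightarrow> \<psi> s = \<infinity>"
    and "\<And>t. conj \<psi> t = ereal (\<psi>s t)"
    and "smooth_real M \<psi>s"
    and "\<And>y \<eta>. y \<in> X \<Longrightarrow> integrable P (\<lambda>\<xi>. lam * \<psi>s ((l y \<xi> - \<eta>) / lam) + \<eta>)"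
    and "x \<in> X"
    and "\<And>\<eta>. objL P lam \<psi>s l x \<eta>1 \<le> objL P lam \<psi>s l x \<eta>"
    and "\<And>\<eta>. objL P lam \<psi>s l x \<eta>2 \<le> objL P lam \<psi>s l x \<eta>"
  shows "grad (\<lambda>y. objL P lam \<psi>s l y \<eta>1) x = grad (\<lambda>y. objL P lam \<psi>s l y \<eta>2) x"
proof -
  note ps = assms(1) and opn = assms(2) and lam = assms(3) and lip = assms(5)
    and cj = assms(11) and sm = assms(12) and intg = assms(13) and xX = assms(14)
    and min1 = assms(15) and min2 = assms(16)
  interpret prob_space P by (rule ps)
  have cv: "convex_on UNIV \<psi>s" by (rule conj_convex[OF cj assms(8)])
  have dfs: "\<And>t. \<psi>s differentiable (at t)" and lips: "\<And>s t. \<bar>deriv \<psi>s s - deriv \<psi>s t\<bar> \<le> M * \<bar>s - t\<bar>"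
    using sm unfolding smooth_real_def by auto
  define \<phi> where "\<phi> y \<eta> \<xi> = lam * \<psi>s ((l y \<xi> - \<eta>) / lam) + \<eta>" for y \<eta> \<xi>
  have objL_eq: "objL P lam \<psi>s l y \<eta> = integral\<^sup>L P (\<phi> y \<eta>)" for y \<eta>
    unfolding objL_def \<phi>_def by simp
  have intphi: "integrable P (\<phi> y \<eta>)" if "y \<in> X" for y \<eta>
    using intg[OF that] unfolding \<phi>_def by simp
  define m where "m = (\<eta>1 + \<eta>2) / 2"
  define t1 where "t1 \<xi> = (l x \<xi> - \<eta>1) / lam" for \<xi>
  define t2 where "t2 \<xi> = (l x \<xi> - \<eta>2) / lam" for \<xi>
  define F where "F \<xi> = (\<phi> x \<eta>1 \<xi> + \<phi> x \<eta>2 \<xi>) / 2 - \<phi> x m \<xi>" for \<xi>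
  have tm: "(l x \<xi> - m) / lam = (t1 \<xi> + t2 \<xi>) / 2" for \<xi>
    unfolding m_def t1_def t2_def using lam by (simp add: field_simps)
  have Feq: "F \<xi> = lam * ((\<psi>s (t1 \<xi>) + \<psi>s (t2 \<xi>)) / 2 - \<psi>s ((t1 \<xi> + t2 \<xi>) / 2))" for \<xi>
  proof -
    have "\<phi> x m \<xi> = lam * \<psi>s ((t1 \<xi> + t2 \<xi>) / 2) + m" unfolding \<phi>_def tm by simp
    moreover have "\<phi> x \<eta>1 \<xi> = lam * \<psi>s (t1 \<xi>) + \<eta>1" "\<phi> x \<eta>2 \<xi> = lam * \<psi>s (t2 \<xi>) + \<eta>2"
      unfolding \<phi>_def t1_def t2_def by simp_all
    ultimately show ?thesis unfolding F_def m_def by (simp add: field_simps)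
  qed
  have Fnn: "F \<xi> \<ge> 0" for \<xi>
  proof -
    have "\<psi>s ((1 - 1/2) *\<^sub>R t1 \<xi> + (1/2) *\<^sub>R t2 \<xi>) \<le> (1 - 1/2) * \<psi>s (t1 \<xi>) + (1/2) * \<psi>s (t2 \<xi>)"
      by (rule convex_onD[OF cv]) auto
    then have "\<psi>s ((t1 \<xi> + t2 \<xi>) / 2) \<le> (\<psi>s (t1 \<xi>) + \<psi>s (t2 \<xi>)) / 2"
      by (simp add: field_simps)
    then show ?thesis unfolding Feq using lam by simp
  qed
  have intF: "integrable P F" unfolding F_def using intphi[OF xX] by auto
  have intFv: "integral\<^sup>L P F = (objL P lam \<psi>s l x \<eta>1 + objL P lam \<psi>s l x \<eta>2) / 2 - objL P lam \<psi>s l x m"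
    unfolding F_def objL_eq using intphi[OF xX] by simp
  have "integral\<^sup>L P F \<le> 0" unfolding intFv using min1[of m] min2[of m] by simp
  moreover have "integral\<^sup>L P F \<ge> 0" using Fnn by (simp add: integral_nonneg_AE)
  ultimately have "integral\<^sup>L P F = 0" by simp
  then have "AE \<xi> in P. F \<xi> = 0" using integral_nonneg_eq_0_iff_AE[OF intF] Fnn by simp
  then have AEd: "AE \<xi> in P. deriv \<psi>s (t1 \<xi>) = deriv \<psi>s (t2 \<xi>)"
  proof (rule AE_mp, intro AE_I2 impI)
    fix \<xi> assume "F \<xi> = 0"
    then have "\<psi>s ((t1 \<xi> + t2 \<xi>) / 2) = (\<psi>s (t1 \<xi>) + \<psi>s (t2 \<xi>)) / 2"
      unfolding Feq using lam by simp
    then show "deriv \<psi>s (t1 \<xi>) = deriv \<psi>s (t2 \<xi>)" by (rule mid_deriv_eq[OF cv dfs])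
  qed
  have M0: "M \<ge> 0" using lips[of 1 0] by simp
  have G0: "G \<ge> 0" using lip unfolding lipschitz_on_def by auto
  define C where "C = 2 * M * G^2 / lam"
  have C0: "C \<ge> 0" unfolding C_def using M0 lam by simp
  define Dfun where "Dfun y = objL P lam \<psi>s l y \<eta>1 - objL P lam \<psi>s l y \<eta>2" for y
  have bound: "\<bar>Dfun y - Dfun x\<bar> \<le> C * (norm (y - x))^2" if yX: "y \<in> X" for y
  proof -
    define H where "H \<xi> = (\<phi> y \<eta>1 \<xi> - \<phi> y \<eta>2 \<xi>) - (\<phi> x \<eta>1 \<xi> - \<phi> x \<eta>2 \<xi>)" for \<xi>
    have intH: "integrable P H" unfolding H_def using intphi[OF xX] intphi[OF yX] by auto
    have HD: "integral\<^sup>L P H = Dfun y - Dfun x"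
      unfolding H_def Dfun_def objL_eq using intphi[OF xX] intphi[OF yX] by simp
    have AEH: "AE \<xi> in P. \<bar>H \<xi>\<bar> \<le> C * (norm (y - x))^2"
      using AEd
    proof (rule AE_mp, intro AE_I2 impI)
      fix \<xi> assume eqd: "deriv \<psi>s (t1 \<xi>) = deriv \<psi>s (t2 \<xi>)"
      define \<delta> where "\<delta> = (l y \<xi> - l x \<xi>) / lam"
      define Dv where "Dv = deriv \<psi>s (t1 \<xi>)"
      have e1: "(l y \<xi> - \<eta>1) / lam = t1 \<xi> + \<delta>" and e2: "(l y \<xi> - \<eta>2) / lam = t2 \<xi> + \<delta>"
        unfolding t1_def t2_def \<delta>_def using lam by (simp_all add: field_simps)
      have "H \<xi> = lam * ((\<psi>s (t1 \<xi> + \<delta>) - \<psi>s (t1 \<xi>) - Dv * \<delta>) - (\<psi>s (t2 \<xi> + \<delta>) - \<psi>s (t2 \<xi>) - Dv * \<delta>))"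
        unfolding H_def \<phi>_def e1 e2 by (simp add: t1_def[symmetric] t2_def[symmetric] algebra_simps)
      also have "\<bar>\<dots>\<bar> \<le> lam * (M * \<delta>^2 + M * \<delta>^2)"
      proof -
        have a1: "\<bar>\<psi>s (t1 \<xi> + \<delta>) - \<psi>s (t1 \<xi>) - Dv * \<delta>\<bar> \<le> M * \<delta>^2"
          using taylor_bound[OF dfs lips, of "t1 \<xi>" \<delta>] unfolding Dv_def by (simp add: mult.commute)
        have a2: "\<bar>\<psi>s (t2 \<xi> + \<delta>) - \<psi>s (t2 \<xi>) - Dv * \<delta>\<bar> \<le> M * \<delta>^2"
          using taylor_bound[OF dfs lips, of "t2 \<xi>" \<delta>] unfolding Dv_def eqd by (simp add: mult.commute)
        show ?thesis using a1 a2 lam by (simp add: abs_mult)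
      qed
      also have "\<dots> = 2 * M * lam * \<delta>^2" by simp
      also have "\<dots> \<le> 2 * M * lam * (G * norm (y - x) / lam)^2"
      proof -
        have "\<bar>l y \<xi> - l x \<xi>\<bar> \<le> G * norm (y - x)"
          using lipschitz_onD[OF lip yX xX] by (simp add: dist_real_def dist_norm)
        then have "\<bar>\<delta>\<bar> \<le> G * norm (y - x) / lam" unfolding \<delta>_def using lam
          by (simp add: abs_div divide_right_mono)
        then have "\<delta>^2 \<le> (G * norm (y - x) / lam)^2"
          by (metis abs_ge_zero order_trans power2_abs power_mono)
        then show ?thesis using M0 lam by (intro mult_left_mono) auto
      qed
      also have "\<dots> = C * (norm (y - x))^2" unfolding C_def using lam by (simp add: field_simps power2_eq_square)
      finally show "\<bar>H \<xi>\<bar> \<le> C * (norm (y - x))^2" .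
    qed
    have "integral\<^sup>L P H \<le> C * (norm (y - x))^2"
      by (rule integral_le_const[OF intH]) (use AEH in auto)
    moreover have "integral\<^sup>L P (\<lambda>\<xi>. - H \<xi>) \<le> C * (norm (y - x))^2"
      by (rule integral_le_const) (use AEH intH in auto)
    ultimately show ?thesis unfolding HD[symmetric] by simp
  qed
  obtain r where r: "r > 0" "ball x r \<subseteq> X" using opn xX openE by blast
  have Dder: "(Dfun has_derivative (\<lambda>h. 0)) (at x)"
    unfolding has_derivative_at_alt
  proof (intro conjI allI impI bounded_linear_zero)
    fix e :: real assume e: "e > 0"
    show "\<exists>d>0. \<forall>y. norm (y - x) < d \<longrightarrow> norm (Dfun y - Dfun x - 0) \<le> e * norm (y - x)"
    proof (intro exI[of _ "min r (e / (C + 1))"] conjI allI impI)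
      show "min r (e / (C + 1)) > 0" using r e C0 by simp
      fix y assume y: "norm (y - x) < min r (e / (C + 1))"
      have yX: "y \<in> X" using y r by (auto simp: dist_norm norm_minus_commute)
      have "norm (Dfun y - Dfun x - 0) \<le> C * (norm (y - x))^2" using bound[OF yX] by simp
      also have "\<dots> = (C * norm (y - x)) * norm (y - x)" by (simp add: power2_eq_square)
      also have "\<dots> \<le> e * norm (y - x)"
      proof (intro mult_right_mono)
        have "C * norm (y - x) \<le> C * (e / (C + 1))" using y C0 by (intro mult_left_mono) auto
        also have "\<dots> \<le> e" using C0 e by (simp add: field_simps)
        finally show "C * norm (y - x) \<le> e" .
      qed simp
      finally show "norm (Dfun y - Dfun x - 0) \<le> e * norm (y - x)" .
    qed
  qed
  have "(\<lambda>g. ((\<lambda>y. objL P lam \<psi>s l y \<eta>1) has_derivative (\<lambda>h. g \<bullet> h)) (at x))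
      = (\<lambda>g. ((\<lambda>y. objL P lam \<psi>s l y \<eta>2) has_derivative (\<lambda>h. g \<bullet> h)) (at x))"
  proof (rule ext, rule iffI)
    fix g assume "((\<lambda>y. objL P lam \<psi>s l y \<eta>1) has_derivative (\<lambda>h. g \<bullet> h)) (at x)"
    from has_derivative_diff[OF this Dder]
    show "((\<lambda>y. objL P lam \<psi>s l y \<eta>2) has_derivative (\<lambda>h. g \<bullet> h)) (at x)"
      unfolding Dfun_def by simp
  next
    fix g assume "((\<lambda>y. objL P lam \<psi>s l y \<eta>2) has_derivative (\<lambda>h. g \<bullet> h)) (at x)"
    from has_derivative_add[OF this Dder]
    show "((\<lambda>y. objL P lam \<psi>s l y \<eta>1) has_derivative (\<lambda>h. g \<bullet> h)) (at x)"
      unfolding Dfun_def by simp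
  qed
  then show ?thesis unfolding grad_def by simp
qed
end
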